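(* Consider the two-graph Moran process on $n$ vertices with mutant graph $G_M=K_n$ (the clique) and resident graph $G_R=CId$, the circulant graph of even degree $d$. (a) If $d\in\Theta(1)$, then the fixation probability satisfies $$f_{G_R,G_M}(r)\le\left[e^{1/r}-\frac{1}{r^n}\frac{1}{n!}\frac{1}{1-\frac1r}\right]^{-1}\ \text{for } r>1,\qquad f_{G_R,G_M}(r)\le\left[e^{1/r}-\frac{1}{r^n}\frac{1}{n!}-o(1)\right]^{-1}\ \text{for } r\le 1;$$ in particular, for constant $r>0$ the upper bound tends to $e^{-1/r}$. (b) If $d\in\omega(1)$, then for $r>0$, $$f_{G_R,G_M}(r)\le\left(1-\frac1r\right)\left[1-\frac{1}{r^{g(n)}}-o(1)\right]^{-1},$$ where $g(n)$ is any function of $n$ with $g(n)\in\omega(1)$ and $g(n)\in o(d)$; in particular, for $r>1$ this bound tends to $1-\frac1r$.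
   Context: Two-graph Moran process: vertex set $V=\{1,\dots,n\}$; resident graph $G_R=(V,E_R)$ and mutant graph $G_M=(V,E_M)$, strongly connected, with row-stochastic weight matrices $W_R=[w^R_{ij}]$, $W_M=[w^M_{ij}]$ ($w^R_{ij}>0$ iff $(i,j)\in E_R$, similarly for $M$). The state is the mutant set $S$; residents have fitness $1$, mutants fitness $r>0$. Each step a vertex $i$ is chosen with probability proportional to fitness; if $i$ is a mutant, it picks $j$ with probability $w^M_{ij}$ and $j$ becomes a mutant; if a resident, it picks $j$ with probability $w^R_{ij}$ and $j$ becomes a resident. Absorption at $S=\emptyset$ or $S=V$ (fixation). The fixation probability $f_{G_R,G_M}(r)$ is the probability of fixation when starting with one mutant at a uniformly random vertex. Undirected graphs are unweighted ($w_{ij}=1/\deg(i)$ for neighbours $j$). For even $d$, $CId$ is the circulant graph $Ci_n(1,2,\dots,d/2)$: vertex set $\{1,\dots,n\}$, each vertex $i$ adjacent to the vertices $((i-1\pm k)\bmod n)+1$ for $k=1,\dots,d/2$ (so $CI2$ is the undirected cycle $C_n$). Asymptotic notation is as $n\to\infty$. *)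

theory Defs
  imports "HOL-Analysis.Analysis" "HOL-Library.Landau_Symbols"
begin

text \<open>Vertices are 0..<n (the paper uses 1..n; shift by one).
 Weight matrices are functions nat => nat => real, meaningful on indices < n.\<close>

definition circ_nbrs :: "nat \<Rightarrow> nat \<Rightarrow> nat \<Rightarrow> nat set" where
  "circ_nbrs n d i = {nat ((int i + k) mod int n) | k::int. 1 \<le> \<bar>k\<bar> \<and> \<bar>k\<bar> \<le> int (d div 2)}"

definition circ_weights :: "nat \<Rightarrow> nat \<Rightarrow> nat \<Rightarrow> nat \<Rightarrow> real" where
  "circ_weights n d i j = (if j \<in> circ_nbrs n d i then 1 / real (card (circ_nbrs n d i)) else 0)"

definition clique_weights :: "nat \<Rightarrow> nat \<Rightarrow> nat \<Rightarrow> real" where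
  "clique_weights n i j = (if i \<noteq> j then 1 / real (n - 1) else 0)"

definition moran_trans ::
  "nat \<Rightarrow> (nat \<Rightarrow> nat \<Rightarrow> real) \<Rightarrow> (nat \<Rightarrow> nat \<Rightarrow> real) \<Rightarrow> real \<Rightarrow> nat set \<Rightarrow> nat set \<Rightarrow> real" where
  "moran_trans n WR WM r S T =
     (\<Sum>i<n. \<Sum>j<n.
        (if i \<in> S then r * WM i j * (if insert j S = T then 1 else 0)
                   else WR i j * (if S - {j} = T then 1 else 0)))
     / (r * real (card S) + real (n - card S))"

text \<open>Probability that the process started in S is in the fixation state V = {..<n} after t steps
 (V is absorbing, so this is the probability of having fixed by time t).\<close>
fun fix_by ::
  "nat \<Rightarrow> (nat \<Rightarrow> nat \<Rightarrow> real) \<Rightarrow> (nat \<Rightarrow> nat \<Rightarrow> real) \<Rightarrow> real \<Rightarrow> nat \<Rightarrow> nat set \<Rightarrow> real" where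
  "fix_by n WR WM r 0 S = (if S = {..<n} then 1 else 0)"
| "fix_by n WR WM r (Suc t) S = (\<Sum>T\<in>Pow {..<n}. moran_trans n WR WM r S T * fix_by n WR WM r t T)"

definition fixation_from ::
  "nat \<Rightarrow> (nat \<Rightarrow> nat \<Rightarrow> real) \<Rightarrow> (nat \<Rightarrow> nat \<Rightarrow> real) \<Rightarrow> real \<Rightarrow> nat set \<Rightarrow> real" where
  "fixation_from n WR WM r S = (SUP t. fix_by n WR WM r t S)"

definition fixation_prob ::
  "nat \<Rightarrow> (nat \<Rightarrow> nat \<Rightarrow> real) \<Rightarrow> (nat \<Rightarrow> nat \<Rightarrow> real) \<Rightarrow> real \<Rightarrow> real" where
  "fixation_prob n WR WM r = (\<Sum>v<n. fixation_from n WR WM r {v}) / real n"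

definition fCK :: "(nat \<Rightarrow> nat) \<Rightarrow> real \<Rightarrow> nat \<Rightarrow> real" where
  "fCK d r n = fixation_prob n (circ_weights n (d n)) (clique_weights n) r"

end

theory Submission
  imports Defs
begin


lemma sum_trans:
  assumes S: "S \<subseteq> {..<n}"
  shows "(\<Sum>T\<in>Pow {..<n}. moran_trans n WR WM r S T * g T) =
    (\<Sum>i<n. \<Sum>j<n. if i \<in> S then r * WM i j * g (insert j S) else WR i j * g (S - {j}))
      / (r * real (card S) + real (n - card S))"
proof -
  define D where "D = r * real (card S) + real (n - card S)"
  have "(\<Sum>T\<in>Pow {..<n}. moran_trans n WR WM r S T * g T) =
     (\<Sum>T\<in>Pow {..<n}. (\<Sum>i<n. \<Sum>j<n.
        (if i \<in> S then r * WM i j * (if insert j S = T then 1 else 0)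
                   else WR i j * (if S - {j} = T then 1 else 0)) * g T) / D)"
    unfolding moran_trans_def D_def
    by (intro sum.cong refl) (simp add: sum_distrib_right)
  also have "\<dots> = (\<Sum>T\<in>Pow {..<n}. \<Sum>i<n. \<Sum>j<n.
        (if i \<in> S then r * WM i j * (if insert j S = T then 1 else 0)
                   else WR i j * (if S - {j} = T then 1 else 0)) * g T) / D"
    by (simp add: sum_divide_distrib)
  also have "(\<Sum>T\<in>Pow {..<n}. \<Sum>i<n. \<Sum>j<n.
        (if i \<in> S then r * WM i j * (if insert j S = T then 1 else 0)
                   else WR i j * (if S - {j} = T then 1 else 0)) * g T)
     = (\<Sum>i<n. \<Sum>j<n. \<Sum>T\<in>Pow {..<n}.
        (if i \<in> S then r * WM i j * (if insert j S = T then 1 else 0)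
                   else WR i j * (if S - {j} = T then 1 else 0)) * g T)"
    by (subst sum.swap, rule sum.cong, rule refl, rule sum.swap)
  also have "\<dots> = (\<Sum>i<n. \<Sum>j<n. if i \<in> S then r * WM i j * g (insert j S) else WR i j * g (S - {j}))"
  proof (intro sum.cong refl)
    fix i j assume j: "j \<in> {..<n}"
    have m1: "insert j S \<in> Pow {..<n}" using S j by auto
    have m2: "S - {j} \<in> Pow {..<n}" using S by auto
    show "(\<Sum>T\<in>Pow {..<n}.
        (if i \<in> S then r * WM i j * (if insert j S = T then 1 else 0)
                   else WR i j * (if S - {j} = T then 1 else 0)) * g T) =
       (if i \<in> S then r * WM i j * g (insert j S) else WR i j * g (S - {j}))"
    proof (cases "i \<in> S")
      case True
      have "(\<Sum>T\<in>Pow {..<n}. r * WM i j * (if insert j S = T then 1 else 0) * g T)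
         = (\<Sum>T\<in>Pow {..<n}. if insert j S = T then r * WM i j * g T else 0)"
        by (intro sum.cong refl) auto
      also have "\<dots> = r * WM i j * g (insert j S)" using m1 by (simp add: sum.delta)
      finally show ?thesis using True by simp
    next
      case False
      have "(\<Sum>T\<in>Pow {..<n}. WR i j * (if S - {j} = T then 1 else 0) * g T)
         = (\<Sum>T\<in>Pow {..<n}. if S - {j} = T then WR i j * g T else 0)"
        by (intro sum.cong refl) auto
      also have "\<dots> = WR i j * g (S - {j})" using m2 by (simp add: sum.delta)
      finally show ?thesis using False by simp
    qed
  qed
  finally show ?thesis unfolding D_def .
qed

lemma split_sum_S:
  fixes n :: nat
  assumes "S \<subseteq> {..<n}"
  shows "(\<Sum>i<n. f i) = (\<Sum>i\<in>S. f i) + (\<Sum>i\<in>{..<n} - S. f i)"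
  using sum.subset_diff[of S "{..<n}" f] assms by (simp add: add.commute)

lemma step_le:
  fixes WR WM :: "nat \<Rightarrow> nat \<Rightarrow> real" and h :: "nat \<Rightarrow> real"
  assumes S: "S \<subseteq> {..<n}" and n: "n \<ge> 1" and r: "r > 0"
    and rowR: "\<And>i. i < n \<Longrightarrow> (\<Sum>j<n. WR i j) = 1"
    and rowM: "\<And>i. i < n \<Longrightarrow> (\<Sum>j<n. WM i j) = 1"
    and cond: "(r * (\<Sum>i\<in>S. \<Sum>j\<in>{..<n}-S. WM i j)) * (h (card S + 1) - h (card S))
        \<le> (\<Sum>i\<in>{..<n}-S. \<Sum>j\<in>S. WR i j) * (h (card S) - h (card S - 1))"
  shows "(\<Sum>T\<in>Pow {..<n}. moran_trans n WR WM r S T * h (card T)) \<le> h (card S)"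
proof -
  define k where "k = card S"
  define D where "D = r * real k + real (n - k)"
  have fS: "finite S" using S finite_subset by blast
  have kn: "k \<le> n" using S unfolding k_def by (metis card_lessThan card_mono finite_lessThan)
  have Dpos: "D > 0"
  proof (cases "k = 0")
    case True then show ?thesis using n unfolding D_def by simp
  next
    case False then show ?thesis using r kn unfolding D_def
      by (simp add: add_pos_nonneg)
  qed
  define F where "F = (\<lambda>i j. if i \<in> S then r * WM i j * h (card (insert j S)) else WR i j * h (card (S - {j})))"
  have cardV: "card ({..<n} - S) = n - k" using S fS unfolding k_def by (simp add: card_Diff_subset)
  have hD: "h k * D = (\<Sum>i<n. \<Sum>j<n. if i \<in> S then r * WM i j * h k else WR i j * h k)"
  proof -
    have "(\<Sum>i<n. \<Sum>j<n. if i \<in> S then r * WM i j * h k else WR i j * h k)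
       = (\<Sum>i<n. if i \<in> S then r * h k else h k)"
    proof (intro sum.cong refl)
      fix i assume i: "i \<in> {..<n}"
      show "(\<Sum>j<n. if i \<in> S then r * WM i j * h k else WR i j * h k) = (if i \<in> S then r * h k else h k)"
        using rowR[of i] rowM[of i] i
        by (cases "i \<in> S") (simp_all add: sum_distrib_right[symmetric] sum_distrib_left[symmetric])
    qed
    also have "\<dots> = (\<Sum>i\<in>S. r * h k) + (\<Sum>i\<in>{..<n}-S. h k)"
      by (subst split_sum_S[OF S]) (intro arg_cong2[where f="(+)"] sum.cong; auto)
    also have "\<dots> = h k * D" unfolding D_def using cardV by (simp add: k_def algebra_simps)
    finally show ?thesis by simp
  qed
  have diff: "(\<Sum>i<n. \<Sum>j<n. F i j) - h k * D =
      (r * (\<Sum>i\<in>S. \<Sum>j\<in>{..<n}-S. WM i j)) * (h (k + 1) - h k)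
      - (\<Sum>i\<in>{..<n}-S. \<Sum>j\<in>S. WR i j) * (h k - h (k - 1))"
  proof -
    have "(\<Sum>i<n. \<Sum>j<n. F i j) - h k * D = (\<Sum>i<n. \<Sum>j<n. F i j - (if i \<in> S then r * WM i j * h k else WR i j * h k))"
      unfolding hD by (simp add: sum_subtractf)
    also have "\<dots> = (\<Sum>i\<in>S. \<Sum>j<n. F i j - r * WM i j * h k) + (\<Sum>i\<in>{..<n}-S. \<Sum>j<n. F i j - WR i j * h k)"
      by (subst split_sum_S[OF S]) (intro arg_cong2[where f="(+)"] sum.cong; auto)
    also have "(\<Sum>i\<in>S. \<Sum>j<n. F i j - r * WM i j * h k) = (\<Sum>i\<in>S. \<Sum>j\<in>{..<n}-S. r * WM i j * (h (k+1) - h k))"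
    proof (rule sum.cong[OF refl])
      fix i assume i: "i \<in> S"
      have "(\<Sum>j<n. F i j - r * WM i j * h k) = (\<Sum>j\<in>S. F i j - r * WM i j * h k) + (\<Sum>j\<in>{..<n}-S. F i j - r * WM i j * h k)"
        by (rule split_sum_S[OF S])
      also have "(\<Sum>j\<in>S. F i j - r * WM i j * h k) = 0"
        using i by (intro sum.neutral) (auto simp: F_def k_def insert_absorb)
      also have "(\<Sum>j\<in>{..<n}-S. F i j - r * WM i j * h k) = (\<Sum>j\<in>{..<n}-S. r * WM i j * (h (k+1) - h k))"
        using i fS by (intro sum.cong refl) (auto simp: F_def k_def algebra_simps)
      finally show "(\<Sum>j<n. F i j - r * WM i j * h k) = (\<Sum>j\<in>{..<n}-S. r * WM i j * (h (k+1) - h k))" by simp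
    qed
    also have "(\<Sum>i\<in>{..<n}-S. \<Sum>j<n. F i j - WR i j * h k) = (\<Sum>i\<in>{..<n}-S. \<Sum>j\<in>S. WR i j * (h (k - 1) - h k))"
    proof (rule sum.cong[OF refl])
      fix i assume i: "i \<in> {..<n}-S"
      have "(\<Sum>j<n. F i j - WR i j * h k) = (\<Sum>j\<in>S. F i j - WR i j * h k) + (\<Sum>j\<in>{..<n}-S. F i j - WR i j * h k)"
        by (rule split_sum_S[OF S])
      also have "(\<Sum>j\<in>{..<n}-S. F i j - WR i j * h k) = 0"
        using i by (intro sum.neutral) (auto simp: F_def k_def)
      also have "(\<Sum>j\<in>S. F i j - WR i j * h k) = (\<Sum>j\<in>S. WR i j * (h (k - 1) - h k))"
        using i fS by (intro sum.cong refl) (auto simp: F_def k_def algebra_simps)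
      finally show "(\<Sum>j<n. F i j - WR i j * h k) = (\<Sum>j\<in>S. WR i j * (h (k - 1) - h k))" by simp
    qed
    finally show ?thesis
      by (simp add: sum_distrib_left sum_distrib_right sum_subtractf algebra_simps sum_negf)
  qed
  have "(\<Sum>T\<in>Pow {..<n}. moran_trans n WR WM r S T * h (card T)) = (\<Sum>i<n. \<Sum>j<n. F i j) / D"
    unfolding F_def D_def k_def by (rule sum_trans[OF S])
  also have "\<dots> \<le> h k"
  proof -
    have "(\<Sum>i<n. \<Sum>j<n. F i j) \<le> h k * D" using diff cond unfolding k_def by simp
    then show ?thesis using Dpos by (simp add: divide_le_eq)
  qed
  finally show ?thesis unfolding k_def .
qed


lemma trans_nonneg:
  assumes r: "r > 0" and nR: "\<And>i j. WR i j \<ge> 0" and nM: "\<And>i j. WM i j \<ge> 0"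
  shows "moran_trans n WR WM r S T \<ge> 0"
  unfolding moran_trans_def
  using r nR nM by (intro divide_nonneg_nonneg sum_nonneg) auto

lemma fix_by_le:
  fixes WR WM :: "nat \<Rightarrow> nat \<Rightarrow> real" and h :: "nat \<Rightarrow> real"
  assumes n: "n \<ge> 1" and r: "r > 0"
    and nR: "\<And>i j. WR i j \<ge> 0" and nM: "\<And>i j. WM i j \<ge> 0"
    and rowR: "\<And>i. i < n \<Longrightarrow> (\<Sum>j<n. WR i j) = 1"
    and rowM: "\<And>i. i < n \<Longrightarrow> (\<Sum>j<n. WM i j) = 1"
    and hnn: "\<And>k. h k \<ge> 0" and hn: "h n = 1"
    and cond: "\<And>S. S \<subseteq> {..<n} \<Longrightarrow> (r * (\<Sum>i\<in>S. \<Sum>j\<in>{..<n}-S. WM i j)) * (h (card S + 1) - h (card S))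
        \<le> (\<Sum>i\<in>{..<n}-S. \<Sum>j\<in>S. WR i j) * (h (card S) - h (card S - 1))"
  shows "S \<subseteq> {..<n} \<Longrightarrow> fix_by n WR WM r t S \<le> h (card S)"
proof (induction t arbitrary: S)
  case 0
  then show ?case using hnn[of "card S"] hn by auto
next
  case (Suc t)
  have "fix_by n WR WM r (Suc t) S = (\<Sum>T\<in>Pow {..<n}. moran_trans n WR WM r S T * fix_by n WR WM r t T)"
    by simp
  also have "\<dots> \<le> (\<Sum>T\<in>Pow {..<n}. moran_trans n WR WM r S T * h (card T))"
    using Suc.IH trans_nonneg[OF r nR nM] by (intro sum_mono mult_left_mono) auto
  also have "\<dots> \<le> h (card S)"
    by (rule step_le[OF Suc.prems n r rowR rowM cond[OF Suc.prems]])
  finally show ?case .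
qed

lemma fixation_prob_le:
  fixes WR WM :: "nat \<Rightarrow> nat \<Rightarrow> real" and h :: "nat \<Rightarrow> real"
  assumes n: "n \<ge> 1" and r: "r > 0"
    and nR: "\<And>i j. WR i j \<ge> 0" and nM: "\<And>i j. WM i j \<ge> 0"
    and rowR: "\<And>i. i < n \<Longrightarrow> (\<Sum>j<n. WR i j) = 1"
    and rowM: "\<And>i. i < n \<Longrightarrow> (\<Sum>j<n. WM i j) = 1"
    and hnn: "\<And>k. h k \<ge> 0" and hn: "h n = 1"
    and cond: "\<And>S. S \<subseteq> {..<n} \<Longrightarrow> (r * (\<Sum>i\<in>S. \<Sum>j\<in>{..<n}-S. WM i j)) * (h (card S + 1) - h (card S))
        \<le> (\<Sum>i\<in>{..<n}-S. \<Sum>j\<in>S. WR i j) * (h (card S) - h (card S - 1))"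
  shows "fixation_prob n WR WM r \<le> h 1"
proof -
  have "fixation_from n WR WM r {v} \<le> h 1" if v: "v < n" for v
    unfolding fixation_from_def
    using fix_by_le[OF n r nR nM rowR rowM hnn hn cond, of "{v}"] v
    by (intro cSUP_least) auto
  then have "(\<Sum>v<n. fixation_from n WR WM r {v}) \<le> (\<Sum>v<n. h 1)"
    by (intro sum_mono) auto
  then show ?thesis using n unfolding fixation_prob_def by (simp add: divide_le_eq mult.commute)
qed

definition bdprod :: "(nat \<Rightarrow> real) \<Rightarrow> nat \<Rightarrow> real" where
  "bdprod \<rho> j = (\<Prod>i\<in>{1..j}. \<rho> i)"

lemma bdprod_Suc: "bdprod \<rho> (Suc j) = bdprod \<rho> j * \<rho> (Suc j)"
  unfolding bdprod_def by (simp add: prod.nat_ivl_Suc' mult.commute)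

lemma bdprod_pos: "(\<And>i. i \<ge> 1 \<Longrightarrow> \<rho> i > 0) \<Longrightarrow> bdprod \<rho> j > 0"
  unfolding bdprod_def by (intro prod_pos) auto

theorem fixation_bound:
  fixes WR WM :: "nat \<Rightarrow> nat \<Rightarrow> real" and \<rho> :: "nat \<Rightarrow> real"
  assumes n: "n \<ge> 1" and r: "r > 0"
    and nR: "\<And>i j. WR i j \<ge> 0" and nM: "\<And>i j. WM i j \<ge> 0"
    and rowR: "\<And>i. i < n \<Longrightarrow> (\<Sum>j<n. WR i j) = 1"
    and rowM: "\<And>i. i < n \<Longrightarrow> (\<Sum>j<n. WM i j) = 1"
    and rpos: "\<And>i. i \<ge> 1 \<Longrightarrow> \<rho> i > 0"
    and cond: "\<And>S. S \<subseteq> {..<n} \<Longrightarrow> S \<noteq> {} \<Longrightarrow> card S < n \<Longrightarrow>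
        r * (\<Sum>i\<in>S. \<Sum>j\<in>{..<n}-S. WM i j) * \<rho> (card S) \<le> (\<Sum>i\<in>{..<n}-S. \<Sum>j\<in>S. WR i j)"
  shows "fixation_prob n WR WM r \<le> 1 / (\<Sum>j<n. bdprod \<rho> j)"
proof -
  define Z where "Z = (\<Sum>j<n. bdprod \<rho> j)"
  define h where "h k = (\<Sum>j<k. bdprod \<rho> j) / Z" for k
  have ppos: "\<And>j. bdprod \<rho> j > 0" by (rule bdprod_pos[OF rpos])
  have Zpos: "Z > 0" unfolding Z_def using n ppos by (intro sum_pos) (auto simp: lessThan_empty_iff)
  have hnn: "h k \<ge> 0" for k unfolding h_def using Zpos ppos by (intro divide_nonneg_nonneg sum_nonneg) (auto intro: less_imp_le)
  have hn: "h n = 1" unfolding h_def Z_def using Zpos Z_def by simp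
  have h1: "h 1 = 1 / Z" unfolding h_def by (simp add: bdprod_def)
  have dh: "h (k + 1) - h k = bdprod \<rho> k / Z" for k unfolding h_def by (simp add: diff_divide_distrib[symmetric])
  have dh2: "h k - h (k - 1) = (if k = 0 then 0 else bdprod \<rho> (k - 1) / Z)" for k
    using dh[of "k - 1"] by auto
  have cond2: "(r * (\<Sum>i\<in>S. \<Sum>j\<in>{..<n}-S. WM i j)) * (h (card S + 1) - h (card S))
        \<le> (\<Sum>i\<in>{..<n}-S. \<Sum>j\<in>S. WR i j) * (h (card S) - h (card S - 1))" if S: "S \<subseteq> {..<n}" for S
  proof -
    have fS: "finite S" using S finite_subset by blast
    have up0: "(\<Sum>i\<in>S. \<Sum>j\<in>{..<n}-S. WM i j) \<ge> 0" using nM by (intro sum_nonneg) auto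
    have cut0: "(\<Sum>i\<in>{..<n}-S. \<Sum>j\<in>S. WR i j) \<ge> 0" using nR by (intro sum_nonneg) auto
    have kn: "card S \<le> n" using S by (metis card_lessThan card_mono finite_lessThan)
    show ?thesis
    proof (cases "S = {}")
      case True then show ?thesis by simp
    next
      case ne: False
      then have k0: "card S \<noteq> 0" using fS by simp
      show ?thesis
      proof (cases "card S < n")
        case False
        then have "S = {..<n}" using kn S by (metis card_lessThan card_subset_eq finite_lessThan le_neq_implies_less)
        then show ?thesis using cut0 dh2 Zpos ppos k0
          by (simp add: less_imp_le)
      next
        case True
        have eq: "bdprod \<rho> (card S) = bdprod \<rho> (card S - 1) * \<rho> (card S)"
          using bdprod_Suc[of \<rho> "card S - 1"] k0 by simp
        have "(r * (\<Sum>i\<in>S. \<Sum>j\<in>{..<n}-S. WM i j)) * (h (card S + 1) - h (card S))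
           = (r * (\<Sum>i\<in>S. \<Sum>j\<in>{..<n}-S. WM i j) * \<rho> (card S)) * (bdprod \<rho> (card S - 1) / Z)"
          unfolding dh eq by (simp add: algebra_simps)
        also have "\<dots> \<le> (\<Sum>i\<in>{..<n}-S. \<Sum>j\<in>S. WR i j) * (bdprod \<rho> (card S - 1) / Z)"
          using cond[OF S ne True] ppos Zpos by (intro mult_right_mono) (auto intro: less_imp_le)
        also have "\<dots> = (\<Sum>i\<in>{..<n}-S. \<Sum>j\<in>S. WR i j) * (h (card S) - h (card S - 1))"
          using dh2 k0 by simp
        finally show ?thesis .
      qed
    qed
  qed
  have "fixation_prob n WR WM r \<le> h 1"
    by (rule fixation_prob_le[OF n r nR nM rowR rowM hnn hn cond2])
  then show ?thesis using h1 Z_def by simp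
qed



lemma pow_maps: "(\<And>a. a \<in> V \<Longrightarrow> \<sigma> a \<in> V) \<Longrightarrow> a \<in> V \<Longrightarrow> (\<sigma> ^^ j) a \<in> V"
  by (induction j) auto

lemma pow_inj:
  assumes maps: "\<And>a. a \<in> V \<Longrightarrow> \<sigma> a \<in> V" and inj: "inj_on \<sigma> V"
  shows "x \<in> V \<Longrightarrow> y \<in> V \<Longrightarrow> (\<sigma> ^^ j) x = (\<sigma> ^^ j) y \<Longrightarrow> x = y"
proof (induction j)
  case 0 then show ?case by simp
next
  case (Suc j)
  then have "(\<sigma> ^^ j) x = (\<sigma> ^^ j) y"
    using inj pow_maps[of V \<sigma>, OF maps] by (auto dest: inj_onD)
  then show ?case using Suc by blast
qed

lemma core:
  fixes \<sigma> :: "nat \<Rightarrow> nat"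
  assumes fin: "finite V" and maps: "\<And>a. a \<in> V \<Longrightarrow> \<sigma> a \<in> V" and inj: "inj_on \<sigma> V"
    and trans: "\<And>a b. a \<in> V \<Longrightarrow> b \<in> V \<Longrightarrow> \<exists>j. (\<sigma> ^^ j) a = b"
    and noper: "\<And>a j. a \<in> V \<Longrightarrow> 0 < j \<Longrightarrow> j \<le> m \<Longrightarrow> (\<sigma> ^^ j) a \<noteq> a"
    and S: "S \<subseteq> V" "S \<noteq> {}" "S \<noteq> V"
  shows "m \<le> (\<Sum>j\<in>{1..m}. card {a\<in>S. (\<sigma> ^^ j) a \<notin> S})"
proof -
  define P where "P j \<longleftrightarrow> (\<forall>a\<in>S. (\<sigma> ^^ j) a \<in> S)" for j
  have fS: "finite S" using S fin finite_subset by blast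
  have injS: "inj_on (\<sigma> ^^ j) S" for j
    using pow_inj[OF maps inj] S(1) unfolding inj_on_def by blast
  have img: "(\<sigma> ^^ j) ` S = S" if "P j" for j
  proof -
    have sub: "(\<sigma> ^^ j) ` S \<subseteq> S" using that unfolding P_def by auto
    have "card ((\<sigma> ^^ j) ` S) = card S" using injS card_image by blast
    then show ?thesis using sub fS card_subset_eq by blast
  qed
  have bck: "x \<in> S" if p1: "P j" and p2: "x \<in> V" and p3: "(\<sigma> ^^ j) x \<in> S" for j x
  proof -
    obtain y where y: "y \<in> S" "(\<sigma> ^^ j) x = (\<sigma> ^^ j) y" using img[OF p1] p3 by force
    then have "x = y" using pow_inj[OF maps inj] p2 S(1) by blast
    then show ?thesis using y by simp
  qed
  have P1: "P 1" if p1: "P j" and p2: "P (Suc j)" for j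
    unfolding P_def
  proof
    fix a assume a: "a \<in> S"
    obtain b where b: "b \<in> S" "a = (\<sigma> ^^ j) b" using img[OF p1] a by force
    have "(\<sigma> ^^ Suc j) b \<in> S" using p2 b(1) unfolding P_def by blast
    then show "(\<sigma> ^^ 1) a \<in> S" using b by simp
  qed
  have notP1: "\<not> P 1"
  proof
    assume p: "P 1"
    have all: "(\<sigma> ^^ j) a \<in> S" if "a \<in> S" for a j
      using that
    proof (induction j)
      case 0 then show ?case by simp
    next
      case (Suc j) then show ?case using p unfolding P_def by simp
    qed
    obtain a where a: "a \<in> S" using S(2) by blast
    obtain b where b: "b \<in> V" "b \<notin> S" using S(1,3) by blast
    obtain j where "(\<sigma> ^^ j) a = b" using trans[of a b] a b S(1) by blast
    then show False using all[OF a, of j] b by simp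
  qed
  define T where "T j = {a\<in>S. (\<sigma> ^^ j) a \<notin> S}" for j
  have fT: "finite (T j)" for j unfolding T_def using fS by simp
  have T1: "card (T j) \<ge> 1" if "\<not> P j" for j
  proof -
    have "T j \<noteq> {}" using that unfolding T_def P_def by blast
    then show ?thesis using fT[of j] by (simp add: Suc_le_eq card_gt_0_iff)
  qed
  have T2: "card (T j) \<ge> 2" if q1: "\<not> P j" and q2: "P h" and q3: "0 < h" and q4: "h \<le> m" for j h
  proof -
    obtain a where a: "a \<in> T j" using q1 unfolding T_def P_def by blast
    have aS: "a \<in> S" "(\<sigma> ^^ j) a \<notin> S" using a unfolding T_def by auto
    have aV: "a \<in> V" using aS S(1) by blast
    have b1: "(\<sigma> ^^ h) a \<in> S" using q2 aS unfolding P_def by blast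
    have comm: "(\<sigma> ^^ j) ((\<sigma> ^^ h) a) = (\<sigma> ^^ h) ((\<sigma> ^^ j) a)"
      by (metis comp_apply funpow_add add.commute)
    have b2: "(\<sigma> ^^ j) ((\<sigma> ^^ h) a) \<notin> S"
    proof
      assume "(\<sigma> ^^ j) ((\<sigma> ^^ h) a) \<in> S"
      then have "(\<sigma> ^^ h) ((\<sigma> ^^ j) a) \<in> S" using comm by simp
      then have "(\<sigma> ^^ j) a \<in> S" using bck[OF q2] pow_maps[of V \<sigma>, OF maps aV] by blast
      then show False using aS by simp
    qed
    have ne: "(\<sigma> ^^ h) a \<noteq> a" using noper[OF aV q3 q4] .
    have "{a, (\<sigma> ^^ h) a} \<subseteq> T j" using aS b1 b2 unfolding T_def by auto
    then have "card {a, (\<sigma> ^^ h) a} \<le> card (T j)" using fT by (intro card_mono) auto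
    then show ?thesis using ne by simp
  qed
  define JP where "JP = {j\<in>{1..m}. P j}"
  define JN where "JN = {j\<in>{1..m}. \<not> P j}"
  have JPN: "card JP + card JN = m"
  proof -
    have "card JP + card JN = card (JP \<union> JN)" unfolding JP_def JN_def
      by (subst card_Un_disjoint) auto
    also have "JP \<union> JN = {1..m}" unfolding JP_def JN_def by auto
    finally show ?thesis by simp
  qed
  have sumge: "(\<Sum>j\<in>{1..m}. card (T j)) \<ge> (\<Sum>j\<in>JN. card (T j))"
    unfolding JN_def by (intro sum_mono2) auto
  show ?thesis
  proof (cases "JP = {}")
    case True
    have "m = (\<Sum>j\<in>{1..m}. (1::nat))" by simp
    also have "\<dots> \<le> (\<Sum>j\<in>{1..m}. card (T j))"
      using True T1 unfolding JP_def by (intro sum_mono) auto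
    finally show ?thesis unfolding T_def .
  next
    case False
    then obtain h where h: "h \<in> JP" by blast
    then have hP: "P h" "0 < h" "h \<le> m" unfolding JP_def by auto
    have "card JP \<le> card JN"
    proof (rule card_inj_on_le)
      show "inj_on (\<lambda>j. j - 1) JP" unfolding JP_def by (auto intro: inj_onI)
      show "(\<lambda>j. j - 1) ` JP \<subseteq> JN"
      proof
        fix x assume "x \<in> (\<lambda>j. j - 1) ` JP"
        then obtain j where j: "j \<in> JP" "x = j - 1" by blast
        have jP: "P j" "1 \<le> j" "j \<le> m" using j unfolding JP_def by auto
        have j1: "j \<noteq> 1" using jP notP1 by auto
        have "\<not> P (j - 1)"
        proof
          assume "P (j - 1)"
          then have "P 1" using P1[of "j - 1"] jP j1 by simp
          then show False using notP1 by simp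
        qed
        then show "x \<in> JN" using j jP j1 unfolding JN_def by auto
      qed
      show "finite JN" unfolding JN_def by simp
    qed
    then have m2: "m \<le> 2 * card JN" using JPN by simp
    have "2 * card JN = (\<Sum>j\<in>JN. (2::nat))" by simp
    also have "\<dots> \<le> (\<Sum>j\<in>JN. card (T j))"
      using T2[OF _ hP] unfolding JN_def by (intro sum_mono) auto
    finally show ?thesis using m2 sumge unfolding T_def by linarith
  qed
qed



definition nb :: "nat \<Rightarrow> nat \<Rightarrow> int \<Rightarrow> nat" where
  "nb n a k = nat ((int a + k) mod int n)"

definition KK :: "nat \<Rightarrow> int set" where
  "KK m = {k. 1 \<le> \<bar>k\<bar> \<and> \<bar>k\<bar> \<le> int m}"

lemma nb_int: "n > 0 \<Longrightarrow> int (nb n a k) = (int a + k) mod int n"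
  unfolding nb_def by simp

lemma nb_lt: "n > 0 \<Longrightarrow> nb n a k < n"
  unfolding nb_def by (simp add: nat_less_iff)

lemma nb_nb: "n > 0 \<Longrightarrow> nb n (nb n a k1) k2 = nb n a (k1 + k2)"
  unfolding nb_def by (simp add: mod_add_left_eq add.assoc)

lemma nb_0: "a < n \<Longrightarrow> nb n a 0 = a"
  unfolding nb_def by simp

lemma nb_pow: "n > 0 \<Longrightarrow> a < n \<Longrightarrow> ((\<lambda>x. nb n x c) ^^ j) a = nb n a (c * int j)"
proof (induction j)
  case 0 then show ?case by (simp add: nb_0)
next
  case (Suc j) then show ?case by (simp add: nb_nb algebra_simps)
qed

lemma nb_eq_dvd: "n > 0 \<Longrightarrow> nb n a k1 = nb n a k2 \<Longrightarrow> int n dvd (k1 - k2)"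
proof -
  assume n: "n > 0" and e: "nb n a k1 = nb n a k2"
  then have "(int a + k1) mod int n = (int a + k2) mod int n" using nb_int[OF n] by metis
  then have "int n dvd (int a + k1) - (int a + k2)" by (simp add: mod_eq_dvd_iff)
  then show ?thesis by simp
qed

lemma small_dvd: assumes "int n dvd x" and "\<bar>x\<bar> < int n" shows "x = 0"
proof (rule ccontr)
  assume "x \<noteq> 0"
  then have "\<bar>int n\<bar> \<le> \<bar>x\<bar>" using dvd_imp_le_int assms(1) by blast
  then show False using assms(2) by simp
qed

lemma circ_nbrs_eq: "circ_nbrs n d i = nb n i ` KK (d div 2)"
  unfolding circ_nbrs_def KK_def nb_def by auto

lemma KK_split: "KK m = int ` {1..m} \<union> (\<lambda>j. - int j) ` {1..m}"
proof -
  have "k \<in> int ` {1..m} \<union> (\<lambda>j. - int j) ` {1..m}" if "k \<in> KK m" for k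
  proof (cases "k > 0")
    case True
    then have "k = int (nat k)" "nat k \<in> {1..m}" using that unfolding KK_def by auto
    then show ?thesis by blast
  next
    case False
    then have "k = - int (nat (-k))" "nat (-k) \<in> {1..m}" using that unfolding KK_def by auto
    then show ?thesis by blast
  qed
  then show ?thesis unfolding KK_def by auto
qed

lemma card_KK: "card (KK m) = 2 * m"
proof -
  have "card (KK m) = card (int ` {1..m}) + card ((\<lambda>j. - int j) ` {1..m})"
    unfolding KK_split by (rule card_Un_disjoint) auto
  also have "\<dots> = m + m" by (subst card_image; auto intro: inj_onI)+
  finally show ?thesis by simp
qed

lemma nb_inj: "n > 0 \<Longrightarrow> 2 * m < n \<Longrightarrow> inj_on (nb n i) (KK m)"
proof (rule inj_onI)
  fix x y assume n: "n > 0" and m: "2 * m < n" and x: "x \<in> KK m" and y: "y \<in> KK m" and e: "nb n i x = nb n i y"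
  have "int n dvd (x - y)" by (rule nb_eq_dvd[OF n e])
  moreover have "\<bar>x\<bar> \<le> int m" "\<bar>y\<bar> \<le> int m" using x y unfolding KK_def by auto
  then have "\<bar>x - y\<bar> < int n" using m by linarith
  ultimately have "x - y = 0" by (rule small_dvd)
  then show "x = y" by simp
qed

lemma nb_ne: "n > 0 \<Longrightarrow> 2 * m < n \<Longrightarrow> i < n \<Longrightarrow> k \<in> KK m \<Longrightarrow> nb n i k \<noteq> i"
proof
  assume n: "n > 0" and m: "2 * m < n" and i: "i < n" and k: "k \<in> KK m" and e: "nb n i k = i"
  then have "nb n i k = nb n i 0" by (simp add: nb_0)
  then have dv: "int n dvd (k - 0)" by (rule nb_eq_dvd[OF n])
  have "\<bar>k\<bar> \<le> int m" "1 \<le> \<bar>k\<bar>" using k unfolding KK_def by auto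
  then have lt: "\<bar>k\<bar> < int n" using m by linarith
  have "k = 0" by (rule small_dvd) (use dv lt in auto)
  then show False using \<open>1 \<le> \<bar>k\<bar>\<close> by simp
qed

lemma circ_core:
  assumes n: "n > 0" and m: "2 * m < n" and c: "c = 1 \<or> c = -1"
    and S: "S \<subseteq> {..<n}" "S \<noteq> {}" "S \<noteq> {..<n}"
  shows "m \<le> (\<Sum>j\<in>{1..m}. card {a\<in>S. nb n a (c * int j) \<notin> S})"
proof -
  define \<sigma> where "\<sigma> = (\<lambda>x. nb n x c)"
  have cc: "c * c = 1" using c by auto
  have maps: "\<And>a. a \<in> {..<n} \<Longrightarrow> \<sigma> a \<in> {..<n}" unfolding \<sigma>_def using nb_lt[OF n] by auto
  have inj: "inj_on \<sigma> {..<n}"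
  proof (rule inj_onI)
    fix x y assume x: "x \<in> {..<n}" and y: "y \<in> {..<n}" and e: "\<sigma> x = \<sigma> y"
    have "nb n (\<sigma> x) (-c) = nb n (\<sigma> y) (-c)" using e by simp
    then show "x = y" unfolding \<sigma>_def using nb_nb[OF n] nb_0 x y by auto
  qed
  have trans: "\<exists>j. (\<sigma> ^^ j) a = b" if a: "a \<in> {..<n}" and b: "b \<in> {..<n}" for a b
  proof -
    define j where "j = nat ((c * (int b - int a)) mod int n)"
    have "int j = (c * (int b - int a)) mod int n" unfolding j_def using n by simp
    have "int (nb n a (c * int j)) = (int a + c * ((c * (int b - int a)) mod int n)) mod int n"
      using nb_int[OF n] \<open>int j = _\<close> by simp
    also have "\<dots> = (int a + (c * ((c * (int b - int a)) mod int n)) mod int n) mod int n"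
      by (rule mod_add_right_eq[symmetric])
    also have "\<dots> = (int a + (c * (c * (int b - int a))) mod int n) mod int n"
      by (simp only: mod_mult_right_eq)
    also have "\<dots> = (int a + c * (c * (int b - int a))) mod int n"
      by (rule mod_add_right_eq)
    also have "c * (c * (int b - int a)) = int b - int a" using cc by (metis mult.assoc mult_1)
    also have "(int a + (int b - int a)) mod int n = int b mod int n" by simp
    also have "\<dots> = int b" using b by simp
    finally have "nb n a (c * int j) = b" by simp
    then show ?thesis unfolding \<sigma>_def using nb_pow[OF n] a by (intro exI[of _ j]) auto
  qed
  have noper: "(\<sigma> ^^ j) a \<noteq> a" if a: "a \<in> {..<n}" and j: "0 < j" "j \<le> m" for a j
  proof
    assume e: "(\<sigma> ^^ j) a = a"
    have an: "a < n" using a by simp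
    have p: "(\<sigma> ^^ j) a = nb n a (c * int j)" unfolding \<sigma>_def by (rule nb_pow[OF n an])
    have "nb n a (c * int j) = nb n a 0" using e p nb_0[OF an] by simp
    then have dv: "int n dvd (c * int j - 0)" by (rule nb_eq_dvd[OF n])
    have ac: "\<bar>c\<bar> = 1" using c by auto
    have "\<bar>c * int j\<bar> = int j" by (simp add: abs_mult ac)
    moreover have "int j < int n" using j m by simp
    ultimately have lt: "\<bar>c * int j\<bar> < int n" by simp
    have "c * int j = 0" by (rule small_dvd) (use dv lt in auto)
    then have "int j = 0" using ac by auto
    then show False using j by simp
  qed
  have "m \<le> (\<Sum>j\<in>{1..m}. card {a\<in>S. (\<sigma> ^^ j) a \<notin> S})"
    by (rule core[OF _ maps inj trans noper S]) auto
  also have "\<dots> = (\<Sum>j\<in>{1..m}. card {a\<in>S. nb n a (c * int j) \<notin> S})"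
  proof (intro sum.cong refl arg_cong[where f=card])
    fix j show "{a\<in>S. (\<sigma> ^^ j) a \<notin> S} = {a\<in>S. nb n a (c * int j) \<notin> S}"
      using S(1) nb_pow[OF n] unfolding \<sigma>_def by auto
  qed
  finally show ?thesis .
qed



lemma card_filter_sum: "finite A \<Longrightarrow> card {x\<in>A. P x} = (\<Sum>x\<in>A. if P x then 1 else (0::nat))"
  by (simp add: sum.inter_filter[symmetric])

locale circ =
  fixes n d :: nat
  assumes ev: "even d" and d2: "2 \<le> d" and dn: "d < n"
begin

definition "m = d div 2"

lemma dm: "d = 2 * m" using ev unfolding m_def by simp
lemma m1: "1 \<le> m" using d2 dm by simp
lemma m2: "2 * m < n" using dn dm by simp
lemma n0: "n > 0" using dn by simp

abbreviation "N i \<equiv> circ_nbrs n d i"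

lemma N_eq: "N i = nb n i ` KK m" unfolding m_def by (rule circ_nbrs_eq)

lemma card_N: "card (N i) = d"
  unfolding N_eq using nb_inj[OF n0 m2] card_KK dm by (simp add: card_image)

lemma N_sub: "N i \<subseteq> {..<n}" unfolding N_eq using nb_lt[OF n0] by auto

lemma fin_N: "finite (N i)" using N_sub finite_subset by blast

lemma not_self: "i < n \<Longrightarrow> i \<notin> N i"
proof
  assume i: "i < n" and "i \<in> N i"
  then obtain k where k: "k \<in> KK m" "i = nb n i k" unfolding N_eq by auto
  then show False using nb_ne[OF n0 m2 i k(1)] by simp
qed

lemma symm: "i < n \<Longrightarrow> j \<in> N i \<Longrightarrow> i \<in> N j"
proof -
  assume i: "i < n" and "j \<in> N i"
  then obtain k where k: "k \<in> KK m" "j = nb n i k" unfolding N_eq by auto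
  have "nb n j (-k) = i" using k nb_nb[OF n0] nb_0[OF i] by simp
  moreover have "-k \<in> KK m" using k unfolding KK_def by auto
  ultimately show "i \<in> N j" unfolding N_eq by force
qed

lemma weights_nonneg: "circ_weights n d i j \<ge> 0"
  unfolding circ_weights_def by simp

lemma row: "(\<Sum>j<n. circ_weights n d i j) = 1"
proof -
  have "(\<Sum>j<n. circ_weights n d i j) = (\<Sum>j\<in>{j\<in>{..<n}. j \<in> N i}. 1 / real (card (N i)))"
    unfolding circ_weights_def by (subst sum.inter_filter) auto
  also have "{j\<in>{..<n}. j \<in> N i} = N i" using N_sub by auto
  finally show ?thesis using card_N d2 by simp
qed

definition "cnt S = (\<Sum>i\<in>{..<n}-S. card (S \<inter> N i))"

lemma cut_eq: assumes fS: "finite S"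
  shows "(\<Sum>i\<in>{..<n}-S. \<Sum>j\<in>S. circ_weights n d i j) = real (cnt S) / real d"
proof -
  have each: "(\<Sum>j\<in>S. circ_weights n d i j) = real (card (S \<inter> N i)) / real d" for i
  proof -
    have "(\<Sum>j\<in>S. circ_weights n d i j) = (\<Sum>j\<in>{j\<in>S. j \<in> N i}. 1 / real d)"
      unfolding circ_weights_def card_N using fS by (subst sum.inter_filter) auto
    also have "{j\<in>S. j \<in> N i} = S \<inter> N i" by auto
    finally show ?thesis by simp
  qed
  show ?thesis unfolding cnt_def each
    by (simp add: sum_divide_distrib)
qed

lemma fin_KK: "finite (KK m)" unfolding KK_split by simp

lemma cnt_ge1:
  assumes S: "S \<subseteq> {..<n}" "S \<noteq> {}" "S \<noteq> {..<n}"
  shows "d \<le> cnt S"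
proof -
  define g where "g k = card {i\<in>{..<n}-S. nb n i k \<in> S}" for k
  have c1: "card (S \<inter> N i) = (\<Sum>k\<in>KK m. if nb n i k \<in> S then 1 else 0)" for i
  proof -
    have "S \<inter> N i = nb n i ` {k\<in>KK m. nb n i k \<in> S}" unfolding N_eq by auto
    moreover have "inj_on (nb n i) {k\<in>KK m. nb n i k \<in> S}"
      by (rule inj_on_subset[OF nb_inj[OF n0 m2]]) auto
    ultimately have "card (S \<inter> N i) = card {k\<in>KK m. nb n i k \<in> S}"
      by (simp add: card_image)
    also have "\<dots> = (\<Sum>k\<in>KK m. if nb n i k \<in> S then 1 else 0)"
      by (rule card_filter_sum[OF fin_KK])
    finally show ?thesis .
  qed
  have "cnt S = (\<Sum>i\<in>{..<n}-S. \<Sum>k\<in>KK m. if nb n i k \<in> S then 1 else 0)"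
    unfolding cnt_def c1 by simp
  also have "\<dots> = (\<Sum>k\<in>KK m. \<Sum>i\<in>{..<n}-S. if nb n i k \<in> S then 1 else 0)"
    by (rule sum.swap)
  also have "\<dots> = (\<Sum>k\<in>KK m. g k)"
    unfolding g_def by (intro sum.cong refl card_filter_sum[symmetric]) simp
  also have "\<dots> = (\<Sum>k\<in>int ` {1..m}. g k) + (\<Sum>k\<in>(\<lambda>j. - int j) ` {1..m}. g k)"
    unfolding KK_split by (rule sum.union_disjoint) auto
  also have "\<dots> = (\<Sum>j\<in>{1..m}. g (int j)) + (\<Sum>j\<in>{1..m}. g (- int j))"
    by (subst sum.reindex; auto intro: inj_onI)+
  finally have eq: "cnt S = (\<Sum>j\<in>{1..m}. g (int j)) + (\<Sum>j\<in>{1..m}. g (- int j))" .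
  define C where "C = {..<n} - S"
  have C: "C \<subseteq> {..<n}" "C \<noteq> {}" "C \<noteq> {..<n}" using S unfolding C_def by auto
  have gC: "g k = card {a\<in>C. nb n a k \<notin> C}" for k
  proof -
    have "{a\<in>C. nb n a k \<notin> C} = {i\<in>{..<n}-S. nb n i k \<in> S}"
      unfolding C_def using nb_lt[OF n0] by auto
    then show ?thesis unfolding g_def by simp
  qed
  have A: "m \<le> (\<Sum>j\<in>{1..m}. g (int j))"
    using circ_core[OF n0 m2 _ C, of 1] unfolding gC by simp
  have B: "m \<le> (\<Sum>j\<in>{1..m}. g (- int j))"
    using circ_core[OF n0 m2 _ C, of "-1"] unfolding gC by simp
  show ?thesis using A B eq dm by simp
qed

lemma cnt_ge2:
  assumes S: "S \<subseteq> {..<n}"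
  shows "real (card S) * (real d + 1 - real (card S)) \<le> real (cnt S)"
proof -
  have fS: "finite S" using S finite_subset by blast
  have "cnt S = (\<Sum>i\<in>{..<n}-S. \<Sum>j\<in>S. if j \<in> N i then 1 else 0)"
    unfolding cnt_def using fS by (intro sum.cong refl) (simp add: card_filter_sum[symmetric] Int_def)
  also have "\<dots> = (\<Sum>j\<in>S. \<Sum>i\<in>{..<n}-S. if j \<in> N i then 1 else 0)"
    by (rule sum.swap)
  also have "\<dots> = (\<Sum>j\<in>S. \<Sum>i\<in>{..<n}-S. if i \<in> N j then 1 else 0)"
  proof (intro sum.cong refl)
    fix j i assume j: "j \<in> S" and i: "i \<in> {..<n}-S"
    have "j \<in> N i \<longleftrightarrow> i \<in> N j" using symm j i S by auto
    then show "(if j \<in> N i then 1 else 0) = (if i \<in> N j then 1 else (0::nat))" by simp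
  qed
  also have "\<dots> = (\<Sum>j\<in>S. card (N j - S))"
  proof (intro sum.cong refl)
    fix j assume "j \<in> S"
    have "N j - S = {i\<in>{..<n}-S. i \<in> N j}" using N_sub by auto
    then show "(\<Sum>i\<in>{..<n}-S. if i \<in> N j then 1 else 0) = card (N j - S)"
      using card_filter_sum[of "{..<n}-S" "\<lambda>i. i \<in> N j"] by simp
  qed
  finally have eq: "cnt S = (\<Sum>j\<in>S. card (N j - S))" .
  have each: "real d + 1 - real (card S) \<le> real (card (N j - S))" if j: "j \<in> S" for j
  proof -
    have jn: "j < n" using j S by auto
    have "N j \<inter> S \<subseteq> S - {j}" using not_self[OF jn] by auto
    then have "card (N j \<inter> S) \<le> card (S - {j})" using fS by (intro card_mono) auto
    also have "card (S - {j}) = card S - 1" using j fS by simp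
    finally have le: "card (N j \<inter> S) \<le> card S - 1" .
    have e1: "card (N j - S) = d - card (N j \<inter> S)"
      using fin_N card_N[of j] by (simp add: card_Diff_subset_Int)
    have xle: "card (N j \<inter> S) \<le> d" using fin_N card_N[of j] by (metis Int_lower1 card_mono)
    have s1: "card S \<ge> 1" using j fS by (metis One_nat_def Suc_leI card_gt_0_iff empty_iff)
    have "card (N j - S) + card (N j \<inter> S) = d" unfolding e1 using xle by simp
    then have r1: "real (card (N j - S)) + real (card (N j \<inter> S)) = real d" by (metis of_nat_add)
    have "card (N j \<inter> S) + 1 \<le> card S" using le s1 by (simp add: le_diff_conv2)
    then have "real (card (N j \<inter> S) + 1) \<le> real (card S)" by (simp only: of_nat_le_iff)
    then have r2: "real (card (N j \<inter> S)) + 1 \<le> real (card S)" by simp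
    note r1 r2
    then show ?thesis by linarith
  qed
  have "real (card S) * (real d + 1 - real (card S)) = (\<Sum>j\<in>S. real d + 1 - real (card S))" by simp
  also have "\<dots> \<le> (\<Sum>j\<in>S. real (card (N j - S)))" using each by (intro sum_mono) auto
  also have "\<dots> = real (cnt S)" unfolding eq by simp
  finally show ?thesis .
qed

end


lemma clique_nonneg: "clique_weights n i j \<ge> 0"
  unfolding clique_weights_def by simp

lemma clique_row: assumes "n \<ge> 2" "i < n" shows "(\<Sum>j<n. clique_weights n i j) = 1"
proof -
  have "(\<Sum>j<n. clique_weights n i j) = (\<Sum>j\<in>{j\<in>{..<n}. i \<noteq> j}. 1 / real (n - 1))"
    unfolding clique_weights_def by (subst sum.inter_filter) auto
  also have "{j\<in>{..<n}. i \<noteq> j} = {..<n} - {i}" by auto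
  finally have e: "(\<Sum>j<n. clique_weights n i j) = (\<Sum>j\<in>{..<n} - {i}. 1 / real (n - 1))" .
  have "card ({..<n} - {i}) = n - 1" using assms by simp
  moreover have "real (n - 1) > 0" using assms by simp
  ultimately show ?thesis unfolding e by simp
qed

lemma clique_up: assumes "S \<subseteq> {..<n}"
  shows "(\<Sum>i\<in>S. \<Sum>j\<in>{..<n}-S. clique_weights n i j) = real (card S) * real (n - card S) / real (n - 1)"
proof -
  have fS: "finite S" using assms finite_subset by blast
  have "(\<Sum>i\<in>S. \<Sum>j\<in>{..<n}-S. clique_weights n i j) = (\<Sum>i\<in>S. \<Sum>j\<in>{..<n}-S. 1 / real (n - 1))"
    unfolding clique_weights_def by (intro sum.cong refl) auto
  also have "card ({..<n} - S) = n - card S" using assms fS by (simp add: card_Diff_subset)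
  then have "(\<Sum>i\<in>S. \<Sum>j\<in>{..<n}-S. 1 / real (n - 1)) = real (card S) * real (n - card S) / real (n - 1)"
    by (simp only: sum_constant) (simp add: field_simps)
  finally show ?thesis .
qed

context circ
begin

lemma fix_bound:
  fixes \<rho> :: "nat \<Rightarrow> real"
  assumes r: "r > 0" and rpos: "\<And>i. i \<ge> 1 \<Longrightarrow> \<rho> i > 0"
    and rc: "\<And>k. 1 \<le> k \<Longrightarrow> k < n \<Longrightarrow>
       r * real k * \<rho> k \<le> 1 \<or> r * real k * \<rho> k \<le> real k * (real d + 1 - real k) / real d"
  shows "fixation_prob n (circ_weights n d) (clique_weights n) r \<le> 1 / (\<Sum>j<n. bdprod \<rho> j)"
proof (rule fixation_bound[OF _ r weights_nonneg clique_nonneg row clique_row rpos])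
  show "1 \<le> n" using n0 by simp
  show "2 \<le> n" using d2 dn by simp
  fix S assume S: "S \<subseteq> {..<n}" and ne: "S \<noteq> {}" and lt: "card S < n"
  define k where "k = card S"
  have fS: "finite S" using S finite_subset by blast
  have k1: "1 \<le> k" using ne fS unfolding k_def by (simp add: Suc_le_eq card_gt_0_iff)
  have SV: "S \<noteq> {..<n}" using lt by auto
  have cut: "(\<Sum>i\<in>{..<n}-S. \<Sum>j\<in>S. circ_weights n d i j) = real (cnt S) / real d"
    by (rule cut_eq[OF fS])
  have dpos: "real d > 0" using d2 by simp
  have c1: "1 \<le> real (cnt S) / real d" using cnt_ge1[OF S ne SV] dpos by simp
  have c2: "real k * (real d + 1 - real k) / real d \<le> real (cnt S) / real d"
    using cnt_ge2[OF S] dpos unfolding k_def by (simp add: divide_right_mono)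
  have X: "r * real k * \<rho> k \<le> real (cnt S) / real d" using rc[OF k1 lt[folded k_def]] c1 c2 by linarith
  have fr: "real (n - k) / real (n - 1) \<le> 1" "real (n - k) / real (n - 1) \<ge> 0"
    using k1 lt unfolding k_def by auto
  have nn: "r * real k * \<rho> k \<ge> 0" using r rpos[OF k1] by simp
  have "r * (\<Sum>i\<in>S. \<Sum>j\<in>{..<n}-S. clique_weights n i j) * \<rho> (card S)
      = (r * real k * \<rho> k) * (real (n - k) / real (n - 1))"
    unfolding clique_up[OF S] k_def by (simp add: algebra_simps)
  also have "\<dots> \<le> r * real k * \<rho> k" by (rule mult_left_le[OF fr(1) nn])
  also have "\<dots> \<le> (\<Sum>i\<in>{..<n}-S. \<Sum>j\<in>S. circ_weights n d i j)" using X cut by simp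
  finally show "r * (\<Sum>i\<in>S. \<Sum>j\<in>{..<n}-S. clique_weights n i j) * \<rho> (card S)
      \<le> (\<Sum>i\<in>{..<n}-S. \<Sum>j\<in>S. circ_weights n d i j)" .
qed

end


context circ
begin

lemma boundA:
  assumes r: "r > 0"
  shows "fixation_prob n (circ_weights n d) (clique_weights n) r \<le> 1 / (\<Sum>j<n. (1 / r) ^ j / fact j)"
proof -
  define \<rho> where "\<rho> k = 1 / (r * real k)" for k
  have bp: "bdprod \<rho> j = (1 / r) ^ j / fact j" for j
  proof (induction j)
    case 0 then show ?case by (simp add: bdprod_def)
  next
    case (Suc j) then show ?case by (simp add: bdprod_Suc \<rho>_def field_simps)
  qed
  have "fixation_prob n (circ_weights n d) (clique_weights n) r \<le> 1 / (\<Sum>j<n. bdprod \<rho> j)"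
  proof (rule fix_bound[OF r])
    show "\<And>i. 1 \<le> i \<Longrightarrow> 0 < \<rho> i" unfolding \<rho>_def using r by simp
    fix k :: nat assume "1 \<le> k" "k < n"
    then have "r * real k * \<rho> k = 1" unfolding \<rho>_def using r by simp
    then show "r * real k * \<rho> k \<le> 1 \<or> r * real k * \<rho> k \<le> real k * (real d + 1 - real k) / real d" by simp
  qed
  then show ?thesis unfolding bp .
qed

lemma boundB:
  assumes r: "r > 0" and M: "M \<le> d" "M < n"
  defines "q \<equiv> (real d + 1 - real M) / (real d * r)"
  shows "fixation_prob n (circ_weights n d) (clique_weights n) r \<le> 1 / (\<Sum>j<M+1. q ^ j)"
    and "fixation_prob n (circ_weights n d) (clique_weights n) r \<le> 1 / q ^ M"
proof -
  define \<rho> where "\<rho> k = (if k \<le> M then (real d + 1 - real k) / (real d * r) else 1 / (r * real k))" for k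
  have dpos: "real d > 0" using d2 by simp
  have qpos: "q > 0" unfolding q_def using M r dpos by (simp add: field_simps)
  have rpos: "\<rho> i > 0" if "1 \<le> i" for i
    unfolding \<rho>_def using r dpos that M by (auto intro!: divide_pos_pos)
  have F: "fixation_prob n (circ_weights n d) (clique_weights n) r \<le> 1 / (\<Sum>j<n. bdprod \<rho> j)"
  proof (rule fix_bound[OF r rpos])
    fix k :: nat assume k: "1 \<le> k" "k < n"
    show "r * real k * \<rho> k \<le> 1 \<or> r * real k * \<rho> k \<le> real k * (real d + 1 - real k) / real d"
    proof (cases "k \<le> M")
      case True
      then have "r * real k * \<rho> k = real k * (real d + 1 - real k) / real d"
        unfolding \<rho>_def using r dpos by (simp add: field_simps)
      then show ?thesis by simp
    next
      case False
      then have "r * real k * \<rho> k = 1" unfolding \<rho>_def using r k by simp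
      then show ?thesis by simp
    qed
  qed
  have bq: "q ^ j \<le> bdprod \<rho> j" if j: "j \<le> M" for j
  proof -
    have "q ^ j = (\<Prod>i\<in>{1..j}. q)" by simp
    also have "\<dots> \<le> bdprod \<rho> j" unfolding bdprod_def
    proof (rule prod_mono)
      fix i assume i: "i \<in> {1..j}"
      then have iM: "i \<le> M" using j by simp
      have "q \<le> \<rho> i" unfolding \<rho>_def q_def using iM r dpos
        by (simp add: divide_right_mono)
      then show "0 \<le> q \<and> q \<le> \<rho> i" using qpos by simp
    qed
    finally show ?thesis .
  qed
  have bpos: "bdprod \<rho> j > 0" for j by (rule bdprod_pos) (use rpos in auto)
  have Z1: "(\<Sum>j<M+1. q ^ j) \<le> (\<Sum>j<n. bdprod \<rho> j)"
  proof -
    have "(\<Sum>j<M+1. q ^ j) \<le> (\<Sum>j<M+1. bdprod \<rho> j)" using bq by (intro sum_mono) auto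
    also have "\<dots> \<le> (\<Sum>j<n. bdprod \<rho> j)" using M bpos by (intro sum_mono2) (auto intro: less_imp_le)
    finally show ?thesis .
  qed
  have Z2: "q ^ M \<le> (\<Sum>j<M+1. q ^ j)"
    using qpos by (intro member_le_sum) auto
  have qM: "q ^ M > 0" using qpos by simp
  show "fixation_prob n (circ_weights n d) (clique_weights n) r \<le> 1 / (\<Sum>j<M+1. q ^ j)"
    using F Z1 Z2 qM by (meson dual_order.trans frac_le less_le_trans order_refl zero_le_one)
  show "fixation_prob n (circ_weights n d) (clique_weights n) r \<le> 1 / q ^ M"
    using F Z1 Z2 qM by (meson dual_order.trans frac_le less_le_trans order_refl zero_le_one)
qed

end


lemma exp_partial: "(\<lambda>n. \<Sum>j<n. x ^ j / fact j) \<longlonglongrightarrow> exp (x::real)"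
proof -
  have "(\<lambda>n. x ^ n /\<^sub>R fact n) sums exp x" by (rule exp_converges)
  then have "(\<lambda>n. x ^ n / fact n) sums exp x" by (simp add: divide_inverse_commute)
  then show ?thesis by (simp add: sums_def)
qed

lemma exp_term0: "(\<lambda>n. x ^ n / fact n) \<longlonglongrightarrow> (0::real)"
proof -
  have "(\<lambda>n. x ^ n /\<^sub>R fact n) sums exp x" by (rule exp_converges)
  then have "summable (\<lambda>n. x ^ n / fact n)" by (simp add: divide_inverse_commute sums_summable)
  then show ?thesis by (rule summable_LIMSEQ_zero)
qed

lemma exp_tail:
  fixes x :: real
  assumes x: "0 \<le> x" "x < 1"
  shows "exp x - (\<Sum>j<n. x ^ j / fact j) \<le> x ^ n / fact n * (1 / (1 - x))"
proof -
  have s: "summable (\<lambda>j. x ^ j / fact j)"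
    using exp_converges[of x] by (simp add: divide_inverse_commute sums_summable)
  have ex: "exp x = (\<Sum>j. x ^ j / fact j)"
    using exp_converges[of x] by (simp add: divide_inverse_commute sums_iff)
  have "exp x - (\<Sum>j<n. x ^ j / fact j) = (\<Sum>j. x ^ (j + n) / fact (j + n))"
    unfolding ex using suminf_split_initial_segment[OF s, of n] by simp
  also have "\<dots> \<le> (\<Sum>j. x ^ n / fact n * x ^ j)"
  proof (rule suminf_le)
    fix j
    have "fact n \<le> (fact (j + n) :: real)" by (intro fact_mono) simp
    then have "x ^ n * x ^ j / fact (j + n) \<le> x ^ n * x ^ j / fact n"
      using x by (intro divide_left_mono) (auto intro: mult_pos_pos)
    then show "x ^ (j + n) / fact (j + n) \<le> x ^ n / fact n * x ^ j"
      by (simp add: power_add mult.commute)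
    show "summable (\<lambda>j. x ^ (j + n) / fact (j + n))" using summable_iff_shift[of "\<lambda>j. x ^ j / fact j" n] s by simp
    show "summable (\<lambda>j. x ^ n / fact n * x ^ j)" using x by (intro summable_mult summable_geometric) simp
  qed
  also have "\<dots> = x ^ n / fact n * (\<Sum>j. x ^ j)"
    using x by (intro suminf_mult summable_geometric) simp
  also have "(\<Sum>j. x ^ j) = 1 / (1 - x)"
    using x by (simp add: suminf_geometric)
  finally show ?thesis .
qed

lemma powr_at_top:
  fixes b :: real
  assumes b: "b > 1" and g: "filterlim g at_top F"
  shows "filterlim (\<lambda>x. b powr g x) at_top F"
proof -
  have "filterlim (\<lambda>x. g x * ln b) at_top F"
    using b by (intro filterlim_at_top_mult_tendsto_pos[OF tendsto_const _ g]) simp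
  then have "filterlim (\<lambda>x. exp (g x * ln b)) at_top F"
    by (rule filterlim_compose[OF exp_at_top])
  moreover have "b powr g x = exp (g x * ln b)" for x using b by (simp add: powr_def)
  ultimately show ?thesis by simp
qed


lemma partB_gt1:
  fixes d :: "nat \<Rightarrow> nat" and g :: "nat \<Rightarrow> real" and r :: real
  assumes evc: "\<forall>\<^sub>F n in sequentially. circ n (d n)"
    and r1: "r > 1"
    and dinf: "filterlim d at_top sequentially"
    and ginf: "filterlim g at_top sequentially"
    and go: "g \<in> o(\<lambda>n. real (d n))"
  shows "\<exists>\<epsilon> :: nat \<Rightarrow> real. \<epsilon> \<longlonglongrightarrow> 0
             \<and> (\<forall>\<^sub>F n in sequentially.
                  fCK d r n \<le> (1 - 1 / r) * (1 / (1 - 1 / r powr g n - \<epsilon> n)))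
             \<and> (r > 1 \<longrightarrow>
                  ((\<lambda>n. (1 - 1 / r) * (1 / (1 - 1 / r powr g n - \<epsilon> n)))
                     \<longlonglongrightarrow> 1 - 1 / r))"
proof -
  have r0: "r > 0" using r1 by simp
  have gd: "(\<lambda>n. g n / real (d n)) \<longlonglongrightarrow> 0" by (rule smalloD_tendsto[OF go])
  have rdinf: "filterlim (\<lambda>n. real (d n)) at_top sequentially"
    by (rule filterlim_compose[OF filterlim_real_sequentially dinf])
  have id0: "(\<lambda>n. 1 / real (d n)) \<longlonglongrightarrow> 0"
    using tendsto_inverse_0_at_top[OF rdinf] by (simp add: inverse_eq_divide)
  have dpos: "\<forall>\<^sub>F n in sequentially. real (d n) > 0"
    using evc by eventually_elim (simp add: circ_def)
  have gpos: "\<forall>\<^sub>F n in sequentially. g n \<ge> 0"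
    using ginf by (simp add: filterlim_at_top)
  define M where "M n = nat \<lfloor>g n\<rfloor>" for n
  define q where "q n = (real (d n) + 1 - real (M n)) / (real (d n) * r)" for n
  define Sg where "Sg n = (\<Sum>j<M n + 1. q n ^ j)" for n
  have evh: "\<forall>\<^sub>F n in sequentially. g n / real (d n) < 1 / 2"
    by (rule order_tendstoD(2)[OF gd]) simp
  have Mg: "\<forall>\<^sub>F n in sequentially. 0 \<le> real (M n) \<and> real (M n) \<le> g n"
    using gpos by eventually_elim (simp add: M_def)
  have evM: "\<forall>\<^sub>F n in sequentially. M n \<le> d n \<and> M n < n"
    using evc evh Mg dpos
  proof eventually_elim
    case (elim n)
    then have "g n < real (d n) / 2" by (simp add: divide_less_eq)
    then have "real (M n) < real (d n)" using elim by linarith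
    then show ?case using elim(1) by (simp add: circ_def)
  qed
  have bB: "\<forall>\<^sub>F n in sequentially. fCK d r n \<le> 1 / Sg n"
    using evc evM
  proof eventually_elim
    case (elim n)
    have "fixation_prob n (circ_weights n (d n)) (clique_weights n) r \<le> 1 / (\<Sum>j<M n + 1. q n ^ j)"
      unfolding q_def by (rule circ.boundB(1)[OF elim(1) r0]) (use elim in auto)
    then show ?case unfolding fCK_def Sg_def .
  qed
  have Md0: "(\<lambda>n. real (M n) / real (d n)) \<longlonglongrightarrow> 0"
  proof (rule tendsto_sandwich[OF _ _ tendsto_const gd])
    show "\<forall>\<^sub>F n in sequentially. 0 \<le> real (M n) / real (d n)" by simp
    show "\<forall>\<^sub>F n in sequentially. real (M n) / real (d n) \<le> g n / real (d n)"
      using Mg dpos by eventually_elim (simp add: divide_right_mono)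
  qed
  have qlim: "q \<longlonglongrightarrow> 1 / r"
  proof -
    have "(\<lambda>n. (1 + 1 / real (d n) - real (M n) / real (d n)) / r) \<longlonglongrightarrow> (1 + 0 - 0) / r"
      using r0 by (intro tendsto_divide tendsto_diff tendsto_add tendsto_const id0 Md0) auto
    moreover have "\<forall>\<^sub>F n in sequentially. (1 + 1 / real (d n) - real (M n) / real (d n)) / r = q n"
      using dpos
    proof eventually_elim
      case (elim n)
      have "1 + 1 / real (d n) - real (M n) / real (d n) = (real (d n) + 1 - real (M n)) / real (d n)"
        using elim by (simp add: diff_divide_distrib add_divide_distrib)
      then show ?case unfolding q_def by simp
    qed
    ultimately show ?thesis by (simp add: tendsto_cong)
  qed
  define c where "c = (1 / r + 1) / 2"
  have ir: "1 / r < 1" "0 < 1 / r" using r1 by auto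
  have aux: "\<And>x::real. 0 < x \<Longrightarrow> x < 1 \<Longrightarrow> x < (x + 1) / 2 \<and> (x + 1) / 2 < 1 \<and> 0 < (x + 1) / 2"
    by auto
  have c1: "1 / r < c" "c < 1" "0 < c" unfolding c_def using aux[OF ir(2) ir(1)] by auto
  note c2 = c1(2) and c3 = c1(3)
  note c = c1
  have evq: "\<forall>\<^sub>F n in sequentially. 0 \<le> q n \<and> q n \<le> c"
    using order_tendstoD(2)[OF qlim c(1)] evM dpos
  proof eventually_elim
    case (elim n)
    then show ?case unfolding q_def using r0 by (auto intro!: divide_nonneg_pos)
  qed
  have Minf: "filterlim M at_top sequentially"
    unfolding filterlim_at_top
  proof
    fix K :: nat
    have "\<forall>\<^sub>F n in sequentially. real K \<le> g n" using ginf by (simp add: filterlim_at_top)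
    then show "\<forall>\<^sub>F n in sequentially. K \<le> M n"
      by eventually_elim (simp add: M_def le_nat_floor)
  qed
  have cM: "(\<lambda>n. c ^ M n) \<longlonglongrightarrow> 0"
    using filterlim_compose[OF LIMSEQ_power_zero[of c] Minf] c by (simp add: o_def)
  have qM: "(\<lambda>n. q n ^ (M n + 1)) \<longlonglongrightarrow> 0"
  proof (rule tendsto_sandwich[OF _ _ tendsto_const])
    show "\<forall>\<^sub>F n in sequentially. 0 \<le> q n ^ (M n + 1)" using evq by eventually_elim simp
    show "\<forall>\<^sub>F n in sequentially. q n ^ (M n + 1) \<le> c * c ^ M n"
      using evq by eventually_elim (metis power_Suc power_mono Suc_eq_plus1)
    show "(\<lambda>n. c * c ^ M n) \<longlonglongrightarrow> 0" using tendsto_mult[OF tendsto_const cM, of c] by simp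
  qed
  have Sglim: "Sg \<longlonglongrightarrow> 1 / (1 - 1 / r)"
  proof -
    have "(\<lambda>n. (1 - q n ^ (M n + 1)) / (1 - q n)) \<longlonglongrightarrow> (1 - 0) / (1 - 1 / r)"
      using r1 by (intro tendsto_divide tendsto_diff tendsto_const qM qlim) auto
    moreover have "\<forall>\<^sub>F n in sequentially. (1 - q n ^ (M n + 1)) / (1 - q n) = Sg n"
      using evq
    proof eventually_elim
      case (elim n)
      then have "q n \<noteq> 1" using c by auto
      then show ?case unfolding Sg_def sum_gp_strict by simp
    qed
    ultimately show ?thesis by (simp add: tendsto_cong)
  qed
  have ypow: "(\<lambda>n. 1 / r powr g n) \<longlonglongrightarrow> 0"
    using tendsto_inverse_0_at_top[OF powr_at_top[OF r1 ginf]] by (simp add: inverse_eq_divide)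
  define \<epsilon> where "\<epsilon> n = 1 - 1 / r powr g n - (1 - 1 / r) * Sg n" for n
  have rr: "1 - 1 / r \<noteq> 0" using r1 by simp
  have eq: "(1 - 1 / r) * (1 / (1 - 1 / r powr g n - \<epsilon> n)) = 1 / Sg n" for n
  proof -
    have e1: "1 - 1 / r powr g n - \<epsilon> n = (1 - 1 / r) * Sg n" unfolding \<epsilon>_def by simp
    have gen: "\<And>a S::real. a \<noteq> 0 \<Longrightarrow> a * (1 / (a * S)) = 1 / S" by simp
    show ?thesis unfolding e1 by (rule gen[OF rr])
  qed
  show ?thesis
  proof (intro exI conjI impI)
    have "\<epsilon> \<longlonglongrightarrow> 1 - 0 - (1 - 1 / r) * (1 / (1 - 1 / r))"
      unfolding \<epsilon>_def by (intro tendsto_diff tendsto_mult tendsto_const ypow Sglim)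
    then show "\<epsilon> \<longlonglongrightarrow> 0" using r1 by simp
    show "\<forall>\<^sub>F n in sequentially. fCK d r n \<le> (1 - 1 / r) * (1 / (1 - 1 / r powr g n - \<epsilon> n))"
      unfolding eq by (rule bB)
    have "(\<lambda>n. 1 / Sg n) \<longlonglongrightarrow> 1 / (1 / (1 - 1 / r))"
      using rr by (intro tendsto_divide tendsto_const Sglim) auto
    then show "(\<lambda>n. (1 - 1 / r) * (1 / (1 - 1 / r powr g n - \<epsilon> n))) \<longlonglongrightarrow> 1 - 1 / r"
      unfolding eq by simp
  qed
qed


lemma final_ineq:
  fixes y r :: real
  assumes y: "0 < y" "y < 1" "y \<le> 1 / r - 1" and r: "0 < r"
  shows "y * y \<le> (1 - 1 / r) * (1 / (1 - 1 / y - 0))"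
proof -
  define a where "a = 1 / r - 1"
  have a: "y \<le> a" using y unfolding a_def by simp
  have e: "(1 - 1 / r) * (1 / (1 - 1 / y - 0)) = a * y / (1 - y)"
    unfolding a_def using y r by (simp add: field_simps)
  have "y * y \<le> a * y" using a y by (simp add: mult_right_mono)
  also have "\<dots> \<le> a * y / (1 - y)"
  proof -
    have "0 \<le> a * y" using a y by simp
    moreover have "0 < 1 - y" "1 - y \<le> 1" using y by auto
    ultimately show ?thesis using mult_left_le[of "1 - y" "a * y"] by (simp add: le_divide_eq)
  qed
  finally show ?thesis unfolding e .
qed

lemma partB_lt1:
  fixes d :: "nat \<Rightarrow> nat" and g :: "nat \<Rightarrow> real" and r :: real
  assumes evc: "\<forall>\<^sub>F n in sequentially. circ n (d n)"
    and r0: "r > 0" and r1: "r < 1"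
    and dinf: "filterlim d at_top sequentially"
    and ginf: "filterlim g at_top sequentially"
    and go: "g \<in> o(\<lambda>n. real (d n))"
  shows "\<exists>\<epsilon> :: nat \<Rightarrow> real. \<epsilon> \<longlonglongrightarrow> 0
             \<and> (\<forall>\<^sub>F n in sequentially.
                  fCK d r n \<le> (1 - 1 / r) * (1 / (1 - 1 / r powr g n - \<epsilon> n)))
             \<and> (r > 1 \<longrightarrow>
                  ((\<lambda>n. (1 - 1 / r) * (1 / (1 - 1 / r powr g n - \<epsilon> n)))
                     \<longlonglongrightarrow> 1 - 1 / r))"
proof -
  have gd: "(\<lambda>n. g n / real (d n)) \<longlonglongrightarrow> 0" by (rule smalloD_tendsto[OF go])
  have rdinf: "filterlim (\<lambda>n. real (d n)) at_top sequentially"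
    by (rule filterlim_compose[OF filterlim_real_sequentially dinf])
  have id0: "(\<lambda>n. 1 / real (d n)) \<longlonglongrightarrow> 0"
    using tendsto_inverse_0_at_top[OF rdinf] by (simp add: inverse_eq_divide)
  have dpos: "\<forall>\<^sub>F n in sequentially. real (d n) > 0"
    using evc by eventually_elim (simp add: circ_def)
  have gpos: "\<forall>\<^sub>F n in sequentially. g n \<ge> 0"
    using ginf by (simp add: filterlim_at_top)
  define s where "s = sqrt r"
  have s: "0 < s" "s < 1" "s * s = r" unfolding s_def using r0 r1 by auto
  define M where "M n = nat \<lceil>4 * g n\<rceil>" for n
  define q where "q n = (real (d n) + 1 - real (M n)) / (real (d n) * r)" for n
  define y where "y n = r powr g n" for n
  have hlim: "(\<lambda>n. 4 * (g n / real (d n)) + 1 / real (d n)) \<longlonglongrightarrow> 4 * 0 + 0"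
    by (intro tendsto_add tendsto_mult tendsto_const gd id0)
  have evh: "\<forall>\<^sub>F n in sequentially. 4 * (g n / real (d n)) + 1 / real (d n) < 1 - s"
    by (rule order_tendstoD(2)[OF hlim]) (use s in simp)
  have Mg: "\<forall>\<^sub>F n in sequentially. 4 * g n \<le> real (M n) \<and> real (M n) \<le> 4 * g n + 1"
    using gpos
  proof eventually_elim
    case (elim n)
    have c: "real_of_int \<lceil>4 * g n\<rceil> - 1 < 4 * g n \<and> 4 * g n \<le> real_of_int \<lceil>4 * g n\<rceil>"
      by (rule ceiling_correct)
    have "\<lceil>4 * g n\<rceil> \<ge> 0" using elim by simp
    then have "real (M n) = real_of_int \<lceil>4 * g n\<rceil>" unfolding M_def by simp
    then show ?case using c by linarith
  qed
  have evM: "\<forall>\<^sub>F n in sequentially. M n \<le> d n \<and> M n < n \<and> s \<le> 1 - real (M n) / real (d n)"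
    using evc evh Mg dpos
  proof eventually_elim
    case (elim n)
    have "real (M n) / real (d n) \<le> (4 * g n + 1) / real (d n)"
      using elim by (simp add: divide_right_mono)
    also have "\<dots> = 4 * (g n / real (d n)) + 1 / real (d n)" by (simp add: add_divide_distrib)
    finally have lt: "real (M n) / real (d n) < 1 - s" using elim by linarith
    then have "real (M n) / real (d n) < 1" using s by linarith
    then have "real (M n) < real (d n)" using elim by (simp add: divide_less_eq)
    then show ?case using elim(1) lt by (simp add: circ_def)
  qed
  have ylim: "y \<longlonglongrightarrow> 0"
  proof -
    have "filterlim (\<lambda>n. (1 / r) powr g n) at_top sequentially"
      by (rule powr_at_top[OF _ ginf]) (use r0 r1 in simp)
    from tendsto_inverse_0_at_top[OF this] show ?thesis
      unfolding y_def using r0 by (simp add: powr_divide inverse_eq_divide)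
  qed
  have ypos: "y n > 0" for n unfolding y_def using r0 by simp
  have evy: "\<forall>\<^sub>F n in sequentially. y n < 1" by (rule order_tendstoD(2)[OF ylim]) simp
  have evy2: "\<forall>\<^sub>F n in sequentially. y n < 1 / r - 1" by (rule order_tendstoD(2)[OF ylim]) (use r0 r1 in simp)
  show ?thesis
  proof (intro exI conjI impI)
    show "(\<lambda>n. 0::real) \<longlonglongrightarrow> 0" by simp
    show "(\<lambda>n. (1 - 1 / r) * (1 / (1 - 1 / r powr g n - 0))) \<longlonglongrightarrow> 1 - 1 / r" if "r > 1"
      using that r1 by simp
    show "\<forall>\<^sub>F n in sequentially. fCK d r n \<le> (1 - 1 / r) * (1 / (1 - 1 / r powr g n - 0))"
      using evc evM Mg evy evy2 gpos
    proof eventually_elim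
      case (elim n)
      have dp: "real (d n) > 0" using elim(1) by (simp add: circ_def)
      have F: "fCK d r n \<le> 1 / q n ^ M n"
        unfolding fCK_def q_def by (rule circ.boundB(2)[OF elim(1) r0]) (use elim in auto)
      have "q n \<ge> (real (d n) - real (M n)) / (real (d n) * r)"
        unfolding q_def using dp r0 by (simp add: divide_right_mono)
      also have "(real (d n) - real (M n)) / (real (d n) * r) = (1 - real (M n) / real (d n)) / r"
        using dp by (simp add: field_simps)
      also have "\<dots> \<ge> s / r" using elim(2) r0 by (simp add: divide_right_mono)
      also have "s / r = 1 / s" using s r0 by (simp add: field_simps)
      finally have qs: "1 / s \<le> q n" .
      have "(1 / s) ^ M n \<le> q n ^ M n" using qs s by (intro power_mono) auto
      moreover have "(1 / s) ^ M n > 0" using s by simp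
      ultimately have "1 / q n ^ M n \<le> 1 / (1 / s) ^ M n" by (intro divide_left_mono) auto
      also have "\<dots> = s ^ M n" by (simp add: power_one_over)
      also have "\<dots> = s powr real (M n)" using s by (simp add: powr_realpow)
      also have "\<dots> \<le> s powr (4 * g n)" using elim(3) s by (intro powr_mono') auto
      also have "s powr (4 * g n) = r powr (2 * g n)"
      proof -
        have "s = r powr (1/2)" unfolding s_def using r0 by (simp add: powr_half_sqrt)
        then have "s powr (4 * g n) = r powr (1/2 * (4 * g n))" by (simp add: powr_powr)
        then show ?thesis by simp
      qed
      also have "\<dots> = y n * y n" unfolding y_def by (simp add: powr_add[symmetric])
      also have "\<dots> \<le> (1 - 1 / r) * (1 / (1 - 1 / y n - 0))"
        using final_ineq[of "y n" r] ypos elim r0 by simp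
      finally show ?case using F unfolding y_def by simp
    qed
  qed
qed


theorem theorem7:
  fixes d :: "nat \<Rightarrow> nat" and r :: real
  assumes d_even: "\<forall>\<^sub>F n in sequentially. even (d n)"
    and d_ge: "\<forall>\<^sub>F n in sequentially. 2 \<le> d n"
    and d_lt: "\<forall>\<^sub>F n in sequentially. d n < n"
    and r_pos: "r > 0"
  shows
   "((\<lambda>n. real (d n)) \<in> \<Theta>(\<lambda>_. 1) \<longrightarrow>
       (r > 1 \<longrightarrow>
          (\<forall>\<^sub>F n in sequentially.
             fCK d r n \<le> 1 / (exp (1 / r) - 1 / r ^ n * (1 / fact n) * (1 / (1 - 1 / r))))
        \<and> ((\<lambda>n. 1 / (exp (1 / r) - 1 / r ^ n * (1 / fact n) * (1 / (1 - 1 / r))))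
              \<longlonglongrightarrow> exp (- 1 / r)))
     \<and> (r \<le> 1 \<longrightarrow>
          (\<exists>\<epsilon> :: nat \<Rightarrow> real. \<epsilon> \<longlonglongrightarrow> 0
             \<and> (\<forall>\<^sub>F n in sequentially.
                  fCK d r n \<le> 1 / (exp (1 / r) - 1 / r ^ n * (1 / fact n) - \<epsilon> n))
             \<and> ((\<lambda>n. 1 / (exp (1 / r) - 1 / r ^ n * (1 / fact n) - \<epsilon> n))
                  \<longlonglongrightarrow> exp (- 1 / r)))))
    \<and> (filterlim d at_top sequentially \<longrightarrow>
       (\<forall>g :: nat \<Rightarrow> real. filterlim g at_top sequentially
            \<and> g \<in> o(\<lambda>n. real (d n)) \<and> r \<noteq> 1 \<longrightarrow>
          (\<exists>\<epsilon> :: nat \<Rightarrow> real. \<epsilon> \<longlonglongrightarrow> 0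
             \<and> (\<forall>\<^sub>F n in sequentially.
                  fCK d r n \<le> (1 - 1 / r) * (1 / (1 - 1 / r powr g n - \<epsilon> n)))
             \<and> (r > 1 \<longrightarrow>
                  ((\<lambda>n. (1 - 1 / r) * (1 / (1 - 1 / r powr g n - \<epsilon> n)))
                     \<longlonglongrightarrow> 1 - 1 / r)))))"

proof -
  have evc: "\<forall>\<^sub>F n in sequentially. circ n (d n)"
    using d_even d_ge d_lt by eventually_elim (simp add: circ_def)
  define E where "E = exp (1 / r)"
  define Z where "Z n = (\<Sum>j<n. (1 / r) ^ j / fact j)" for n
  have Epos: "E > 0" unfolding E_def by simp
  have bA: "\<forall>\<^sub>F n in sequentially. fCK d r n \<le> 1 / Z n"
    using evc by eventually_elim (simp add: fCK_def Z_def circ.boundA[OF _ r_pos])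
  have Zlim: "Z \<longlonglongrightarrow> E" unfolding Z_def E_def by (rule exp_partial)
  have T0: "(\<lambda>n. 1 / r ^ n * (1 / fact n)) \<longlonglongrightarrow> 0"
    using exp_term0[of "1 / r"] by (simp add: power_one_over)
  have expm: "exp (- 1 / r) = 1 / E" unfolding E_def by (simp add: exp_minus inverse_eq_divide)
  have partA1: "\<forall>\<^sub>F n in sequentially.
             fCK d r n \<le> 1 / (exp (1 / r) - 1 / r ^ n * (1 / fact n) * (1 / (1 - 1 / r)))"
     and partA2: "((\<lambda>n. 1 / (exp (1 / r) - 1 / r ^ n * (1 / fact n) * (1 / (1 - 1 / r))))
              \<longlonglongrightarrow> exp (- 1 / r))" if r1: "r > 1"
  proof -
    define T where "T n = 1 / r ^ n * (1 / fact n) * (1 / (1 - 1 / r))" for n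
    have Tlim: "T \<longlonglongrightarrow> 0" unfolding T_def using tendsto_mult[OF T0 tendsto_const, of "1 / (1 - 1 / r)"] by simp
    have evT: "\<forall>\<^sub>F n in sequentially. T n < E" by (rule order_tendstoD(2)[OF Tlim Epos])
    have x: "0 \<le> 1 / r" "1 / r < 1" using r1 by auto
    have "\<forall>\<^sub>F n in sequentially. fCK d r n \<le> 1 / (E - T n)"
      using bA evT
    proof eventually_elim
      case (elim n)
      have "E - Z n \<le> T n" unfolding E_def Z_def T_def
        using exp_tail[OF x, of n] by (simp add: power_one_over)
      then have le: "E - T n \<le> Z n" by simp
      have pos: "0 < E - T n" using elim by simp
      have "1 / Z n \<le> 1 / (E - T n)" using le pos by (intro divide_left_mono) auto
      then show ?case using elim by simp
    qed
    then show "\<forall>\<^sub>F n in sequentially.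
             fCK d r n \<le> 1 / (exp (1 / r) - 1 / r ^ n * (1 / fact n) * (1 / (1 - 1 / r)))"
      unfolding T_def E_def .
    have "(\<lambda>n. 1 / (E - T n)) \<longlonglongrightarrow> 1 / (E - 0)"
      using Epos by (intro tendsto_divide tendsto_const tendsto_diff Tlim) auto
    then show "((\<lambda>n. 1 / (exp (1 / r) - 1 / r ^ n * (1 / fact n) * (1 / (1 - 1 / r))))
              \<longlonglongrightarrow> exp (- 1 / r))" unfolding expm unfolding T_def E_def by simp
  qed
  have partA3: "\<exists>\<epsilon> :: nat \<Rightarrow> real. \<epsilon> \<longlonglongrightarrow> 0
             \<and> (\<forall>\<^sub>F n in sequentially.
                  fCK d r n \<le> 1 / (exp (1 / r) - 1 / r ^ n * (1 / fact n) - \<epsilon> n))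
             \<and> ((\<lambda>n. 1 / (exp (1 / r) - 1 / r ^ n * (1 / fact n) - \<epsilon> n))
                  \<longlonglongrightarrow> exp (- 1 / r))"
  proof (intro exI conjI)
    define \<epsilon> where "\<epsilon> n = E - 1 / r ^ n * (1 / fact n) - Z n" for n
    have eq: "exp (1 / r) - 1 / r ^ n * (1 / fact n) - \<epsilon> n = Z n" for n
      unfolding \<epsilon>_def E_def by simp
    have "\<epsilon> \<longlonglongrightarrow> E - 0 - E" unfolding \<epsilon>_def
      by (intro tendsto_diff tendsto_const T0 Zlim)
    then show "\<epsilon> \<longlonglongrightarrow> 0" by simp
    show "\<forall>\<^sub>F n in sequentially. fCK d r n \<le> 1 / (exp (1 / r) - 1 / r ^ n * (1 / fact n) - \<epsilon> n)"
      unfolding eq by (rule bA)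
    have "(\<lambda>n. 1 / Z n) \<longlonglongrightarrow> 1 / E" using Epos by (intro tendsto_divide tendsto_const Zlim) auto
    then show "(\<lambda>n. 1 / (exp (1 / r) - 1 / r ^ n * (1 / fact n) - \<epsilon> n)) \<longlonglongrightarrow> exp (- 1 / r)"
      unfolding eq expm .
  qed
  have partB: "filterlim d at_top sequentially \<longrightarrow>
       (\<forall>g :: nat \<Rightarrow> real. filterlim g at_top sequentially
            \<and> g \<in> o(\<lambda>n. real (d n)) \<and> r \<noteq> 1 \<longrightarrow>
          (\<exists>\<epsilon> :: nat \<Rightarrow> real. \<epsilon> \<longlonglongrightarrow> 0
             \<and> (\<forall>\<^sub>F n in sequentially.
                  fCK d r n \<le> (1 - 1 / r) * (1 / (1 - 1 / r powr g n - \<epsilon> n)))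
             \<and> (r > 1 \<longrightarrow>
                  ((\<lambda>n. (1 - 1 / r) * (1 / (1 - 1 / r powr g n - \<epsilon> n)))
                     \<longlonglongrightarrow> 1 - 1 / r))))"
  proof (intro impI allI)
      assume dinf: "filterlim d at_top sequentially"
      fix g :: "nat \<Rightarrow> real"
      assume H: "filterlim g at_top sequentially \<and> g \<in> o(\<lambda>n. real (d n)) \<and> r \<noteq> 1"
      then have ginf: "filterlim g at_top sequentially" and go: "g \<in> o(\<lambda>n. real (d n))" and rn: "r \<noteq> 1"
        by auto
      show "\<exists>\<epsilon> :: nat \<Rightarrow> real. \<epsilon> \<longlonglongrightarrow> 0
             \<and> (\<forall>\<^sub>F n in sequentially.
                  fCK d r n \<le> (1 - 1 / r) * (1 / (1 - 1 / r powr g n - \<epsilon> n)))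
             \<and> (r > 1 \<longrightarrow>
                  ((\<lambda>n. (1 - 1 / r) * (1 / (1 - 1 / r powr g n - \<epsilon> n)))
                     \<longlonglongrightarrow> 1 - 1 / r))"
      proof (cases "r > 1")
        case True
        show ?thesis by (rule partB_gt1[OF evc True dinf ginf go])
      next
        case False
        then have "r < 1" using rn by simp
        show ?thesis by (rule partB_lt1[OF evc r_pos \<open>r < 1\<close> dinf ginf go])
      qed
    qed
  show ?thesis using partA1 partA2 partA3 partB by blast
qed

end
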